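(* Consider binary floating-point arithmetic with precision $p \ge 2$ and unit round-off $u = 2^{-p}$, where every operation (including square root) is correctly rounded to nearest, $\mathrm{RN}$. Let $x,y$ be floating-point numbers and consider the algorithm $s_x \gets \mathrm{RN}(x^2)$, $s_y \gets \mathrm{RN}(y^2)$, $\sigma \gets \mathrm{RN}(s_x+s_y)$, $\rho \gets \mathrm{RN}(\sqrt{\sigma})$. Barring underflow and overflow, for $u \le 1/4$ the relative error $R = \rho/\sqrt{x^2+y^2} - 1$ satisfies \[ |R| \le \frac{1+3u-\sqrt{1+2u}}{1+u} = 2u + \kappa u^2, \quad\text{with } \kappa < -\tfrac54. \]
   Context: A radix-2 floating-point number of precision $p$ has the form $M\cdot 2^{e-p+1}$ with integers $|M|\le 2^p-1$ and $e_{\min}\le e\le e_{\max}$. $\mathrm{RN}$ denotes rounding to nearest (ties-to-even) into this set. "Barring underflow and overflow" means all intermediate results lie in the normal range $2^{e_{\min}}\le |t|\le (2^p-1)2^{e_{\max}-p+1}$ (or are zero). The unit round-off is $u=2^{-p}$. *)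

theory Defs
  imports Complex_Main
begin

definition fp_set :: "nat \<Rightarrow> int \<Rightarrow> int \<Rightarrow> real set" where
  "fp_set p emin emax =
     {of_int M * 2 powr (of_int (e - int p + 1)) | M e.
        \<bar>M\<bar> \<le> 2 ^ p - 1 \<and> emin \<le> e \<and> e \<le> emax}"

definition fp_even :: "nat \<Rightarrow> int \<Rightarrow> int \<Rightarrow> real \<Rightarrow> bool" where
  "fp_even p emin emax r \<longleftrightarrow>
     (\<exists>M e. \<bar>M\<bar> \<le> 2 ^ p - 1 \<and> emin \<le> e \<and> e \<le> emax \<and> even M \<and>
            r = of_int M * 2 powr (of_int (e - int p + 1)))"

definition is_RN :: "nat \<Rightarrow> int \<Rightarrow> int \<Rightarrow> real \<Rightarrow> real \<Rightarrow> bool" where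
  "is_RN p emin emax t r \<longleftrightarrow>
     r \<in> fp_set p emin emax \<and>
     (\<forall>f \<in> fp_set p emin emax. \<bar>t - r\<bar> \<le> \<bar>t - f\<bar>) \<and>
     (\<forall>f \<in> fp_set p emin emax. \<bar>t - f\<bar> = \<bar>t - r\<bar> \<and> f \<noteq> r \<longrightarrow> fp_even p emin emax r)"

definition in_normal_range :: "nat \<Rightarrow> int \<Rightarrow> int \<Rightarrow> real \<Rightarrow> bool" where
  "in_normal_range p emin emax t \<longleftrightarrow>
     t = 0 \<or> (2 powr of_int emin \<le> \<bar>t\<bar> \<and> \<bar>t\<bar> \<le> (2 ^ p - 1) * 2 powr of_int (emax - int p + 1))"

end

theory Submission
  imports Defs
begin

lemma pow2_int_split:
  "(2::real) powr of_int (a + b) = 2 powr of_int a * 2 powr of_int b"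
  by (simp add: powr_add)

lemma fp_pow2:
  assumes "emin \<le> e" "e \<le> emax" "p \<ge> 1"
  shows "(2::real) powr of_int e \<in> fp_set p emin emax"
proof -
  have "(2::real) powr of_int e = of_int ((2::int)^(p-1)) * 2 powr of_int (e - int p + 1)"
  proof -
    have "(2::real) powr of_int e = 2 powr (real (p-1)) * 2 powr of_int (e - int p + 1)"
      using assms(3) by (simp add: powr_add[symmetric] of_nat_diff)
    then show ?thesis by (simp add: powr_realpow)
  qed
  moreover have "\<bar>(2::int)^(p-1)\<bar> \<le> 2^p - 1"
  proof -
    have "(2::int)^p = 2 * 2^(p-1)" using assms(3)
      by (metis Suc_diff_le diff_Suc_1 power_Suc)
    then show ?thesis by simp
  qed
  ultimately show ?thesis unfolding fp_set_def using assms by blast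
qed

lemma fp_grid:
  assumes "f \<in> fp_set p emin emax" "(2::real) powr of_int e \<le> \<bar>f\<bar>"
  shows "\<exists>k::int. f = of_int k * 2 powr of_int (e - int p + 1)"
proof -
  obtain M k where M: "\<bar>M\<bar> \<le> 2 ^ p - 1" and f: "f = of_int M * 2 powr (of_int (k - int p + 1))"
    using assms(1) unfolding fp_set_def by blast
  have ek: "e \<le> k"
  proof (rule ccontr)
    assume "\<not> e \<le> k"
    hence ke: "k + 1 \<le> e" by simp
    have "\<bar>f\<bar> = \<bar>of_int M\<bar> * 2 powr (of_int (k - int p + 1))" using f by (simp add: abs_mult)
    also have "\<dots> \<le> (2^p - 1) * 2 powr (of_int (k - int p + 1))"
    proof -
      have "\<bar>real_of_int M\<bar> \<le> 2^p - 1" using M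
        proof - have "real_of_int \<bar>M\<bar> \<le> real_of_int (2^p - 1)" using M by (simp only: of_int_le_iff) then show ?thesis by simp qed
      then show ?thesis by (intro mult_right_mono) auto
    qed
    also have "\<dots> < 2^p * 2 powr (of_int (k - int p + 1))" by simp
    also have "\<dots> = 2 powr of_int (k+1)"
      by (simp add: powr_add[symmetric] powr_realpow[symmetric])
    also have "\<dots> \<le> 2 powr of_int e" using ke by simp
    finally show False using assms(2) by simp
  qed
  have "(2::real) powr (of_int (k - int p + 1)) = 2 ^ nat (k - e) * 2 powr of_int (e - int p + 1)"
  proof -
    have "(2::real) powr (of_int (k - int p + 1)) = 2 powr (real (nat (k - e))) * 2 powr of_int (e - int p + 1)"
      using ek by (simp add: powr_add[symmetric]) (rule arg_cong[where f="\<lambda>x. 2 powr x"], simp)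
    then show ?thesis by (simp add: powr_realpow)
  qed
  hence "f = of_int (M * 2 ^ nat (k - e)) * 2 powr of_int (e - int p + 1)" using f by simp
  then show ?thesis by blast
qed


lemma near_float:
  assumes p1: "p \<ge> 1" and emin: "emin \<le> e"
    and lo: "(2::real) powr of_int e \<le> t" and hi: "t < 2 powr of_int (e+1)"
    and mx: "t \<le> (2 ^ p - 1) * 2 powr of_int (emax - int p + 1)"
  shows "e \<le> emax \<and> (\<exists>f \<in> fp_set p emin emax. \<bar>t - f\<bar> \<le> 2 powr of_int (e - int p))"
proof -
  define U where "U = (2::real) powr of_int (e - int p + 1)"
  have U0: "U > 0" unfolding U_def by simp
  have E: "(2::real) powr of_int e = 2^(p-1) * U"
  proof -
    have "(2::real) powr of_int e = 2 powr (real (p-1)) * U"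
      using p1 unfolding U_def by (simp add: powr_add[symmetric] of_nat_diff)
    then show ?thesis by (simp add: powr_realpow)
  qed
  have E1: "(2::real) powr of_int (e+1) = 2^p * U"
  proof -
    have "(2::real) powr of_int (e+1) = 2 powr (real p) * U"
      unfolding U_def by (simp add: powr_add[symmetric])
    then show ?thesis by (simp add: powr_realpow)
  qed
  have half: "(2::real) powr of_int (e - int p) = U / 2"
    unfolding U_def by (simp add: powr_add powr_diff)
  have eemax: "e \<le> emax"
  proof (rule ccontr)
    assume "\<not> e \<le> emax"
    hence "emax + 1 \<le> e" by simp
    have "(2 ^ p - 1) * 2 powr of_int (emax - int p + 1) < (2::real) ^ p * 2 powr of_int (emax - int p + 1)"
      by simp
    also have "\<dots> = 2 powr of_int (emax + 1)"
      by (simp add: powr_add[symmetric] powr_realpow[symmetric])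
    also have "\<dots> \<le> 2 powr of_int e" using \<open>emax + 1 \<le> e\<close> by simp
    finally show False using lo mx by simp
  qed
  define M where "M = \<lfloor>t / U + 1/2\<rfloor>"
  have Mle: "of_int M \<le> t / U + 1/2" "t / U + 1/2 < of_int M + 1" unfolding M_def by linarith+
  have err: "\<bar>t - of_int M * U\<bar> \<le> U / 2"
  proof -
    have "\<bar>t / U - of_int M\<bar> \<le> 1/2" using Mle by linarith
    hence "\<bar>t / U - of_int M\<bar> * U \<le> 1/2 * U" using U0 by (intro mult_right_mono) auto
    moreover have "\<bar>t / U - of_int M\<bar> * U = \<bar>t - of_int M * U\<bar>"
    proof -
      have "(t / U - of_int M) * U = t - of_int M * U" using U0 by (simp add: field_simps)
      then show ?thesis using U0 by (metis abs_mult abs_of_pos)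
    qed
    ultimately show ?thesis by simp
  qed
  have tU: "t / U < 2^p" using hi E1 U0 by (simp add: divide_less_eq)
  have tU2: "t / U \<ge> 2^(p-1)" using lo E U0 by (simp add: le_divide_eq)
  have Mpos: "M \<ge> 0"
  proof -
    have "(0::real) \<le> 2^(p-1)" by simp
    then have "0 \<le> t / U + 1/2" using tU2 by linarith
    then show ?thesis unfolding M_def by simp
  qed
  have "real_of_int M < 2^p + 1" using Mle tU by linarith
  hence "real_of_int M < real_of_int (2^p + 1)" by simp
  hence "M < 2^p + 1" by (simp only: of_int_less_iff)
  hence Mle2': "M \<le> 2^p" by simp
  show ?thesis
  proof (cases "M \<le> 2^p - 1")
    case True
    have "of_int M * U \<in> fp_set p emin emax"
      unfolding fp_set_def U_def using True Mpos emin eemax by fastforce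
    then show ?thesis using err half eemax by auto
  next
    case False
    hence Meq: "M = 2^p" using Mle2' by simp
    have ee: "e + 1 \<le> emax"
    proof (rule ccontr)
      assume "\<not> e + 1 \<le> emax"
      hence "e = emax" using eemax by simp
      hence "t \<le> (2^p - 1) * U" using mx unfolding U_def by simp
      hence "t / U \<le> 2^p - 1" using U0 by (simp add: divide_le_eq)
      hence "real_of_int M \<le> 2^p - 1/2" using Mle by linarith
      thus False using Meq by simp
    qed
    have "of_int M * U = 2 powr of_int (e+1)" using Meq E1 by simp
    moreover have "2 powr of_int (e+1) \<in> fp_set p emin emax"
      using fp_pow2[OF _ ee p1] emin by simp
    ultimately show ?thesis using err half eemax by (metis)
  qed
qed


lemma rn_err_pos:
  assumes p1: "p \<ge> 1" and t0: "t > 0" and nt: "in_normal_range p emin emax t"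
    and rn: "is_RN p emin emax t r"
  defines "e \<equiv> \<lfloor>log 2 t\<rfloor>"
  shows "emin \<le> e \<and> e \<le> emax \<and> 2 powr of_int e \<le> t \<and> t < 2 powr of_int (e+1)
     \<and> \<bar>r - t\<bar> \<le> 2 powr of_int (e - int p) \<and> \<bar>r - t\<bar> \<le> t - 2 powr of_int e"
proof -
  have b: "2 powr of_int e \<le> t \<and> t < 2 powr of_int (e+1)"
    using floor_log_eq_powr_iff[OF t0, of 2 e] unfolding e_def by simp
  have nt': "2 powr of_int emin \<le> t" "t \<le> (2 ^ p - 1) * 2 powr of_int (emax - int p + 1)"
    using nt t0 unfolding in_normal_range_def by auto
  have emin: "emin \<le> e"
  proof (rule ccontr)
    assume "\<not> emin \<le> e" hence "e + 1 \<le> emin" by simp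
    hence "(2::real) powr of_int (e+1) \<le> 2 powr of_int emin" by (intro powr_mono) auto
    thus False using b nt' by linarith
  qed
  obtain f where f: "f \<in> fp_set p emin emax" "\<bar>t - f\<bar> \<le> 2 powr of_int (e - int p)" and emax: "e \<le> emax"
    using near_float[OF p1 emin _ _ nt'(2)] b by blast
  have rmin: "\<forall>g \<in> fp_set p emin emax. \<bar>t - r\<bar> \<le> \<bar>t - g\<bar>" using rn unfolding is_RN_def by blast
  have e1: "\<bar>r - t\<bar> \<le> 2 powr of_int (e - int p)" using rmin f by force
  have "\<bar>r - t\<bar> \<le> \<bar>t - 2 powr of_int e\<bar>" using rmin fp_pow2[OF emin emax p1] by force
  then have e2: "\<bar>r - t\<bar> \<le> t - 2 powr of_int e" using b by simp
  show ?thesis using emin emax b e1 e2 by simp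
qed

lemma rn_err_rel:
  assumes p1: "p \<ge> 1" and ee: "emin \<le> emax" and t0: "t \<ge> 0" and nt: "in_normal_range p emin emax t"
    and rn: "is_RN p emin emax t r"
  shows "\<bar>r - t\<bar> \<le> 2 powr (- real p) / (1 + 2 powr (- real p)) * t"
proof (cases "t = 0")
  case True
  have "0 \<in> fp_set p emin emax" unfolding fp_set_def using ee
    by (rule_tac CollectI, rule_tac x=0 in exI, rule_tac x=emin in exI) simp
  then have "\<bar>t - r\<bar> \<le> \<bar>t - 0\<bar>" using rn unfolding is_RN_def by blast
  then show ?thesis using True by simp
next
  case False
  define e where "e = \<lfloor>log 2 t\<rfloor>"
  define u where "u = (2::real) powr (- real p)"
  have u0: "u > 0" unfolding u_def by simp
  have H: "\<bar>r - t\<bar> \<le> 2 powr of_int (e - int p) \<and> \<bar>r - t\<bar> \<le> t - 2 powr of_int e"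
    using rn_err_pos[OF p1 _ nt rn] False t0 unfolding e_def by simp
  have "(2::real) powr of_int (e - int p) = u * 2 powr of_int e"
    unfolding u_def by (simp add: powr_add[symmetric])
  with H have D1: "\<bar>r - t\<bar> \<le> u * 2 powr of_int e" and D2: "\<bar>r - t\<bar> \<le> t - 2 powr of_int e" by auto
  have "u * \<bar>r - t\<bar> \<le> u * (t - 2 powr of_int e)" using D2 u0 by (simp add: mult_left_mono)
  hence "\<bar>r - t\<bar> * (1 + u) \<le> u * t" using D1 by (simp add: algebra_simps)
  hence "\<bar>r - t\<bar> \<le> u * t / (1 + u)" using u0 by (simp add: le_divide_eq)
  then show ?thesis unfolding u_def by simp
qed


lemma poly1:
  assumes "(u::real) > 0" "u \<le> 1/4"
  shows "((1 + 2*u) * (1 + 3*u))^2 \<le> (1 + 4*u)^2 * (1 + 4*u)"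
proof -
  have eq: "(1 + 4*u)^2 * (1 + 4*u) - ((1 + 2*u) * (1 + 3*u))^2 = u * (2 + 11*u + 4*u^2 - 36*u^3)"
    by (simp add: algebra_simps power2_eq_square power3_eq_cube)
  have "u*u \<le> (1/4)*(1/4)" using assms by (intro mult_mono) auto
  hence "u*(u*u) \<le> u*(1/16)" using assms by (intro mult_left_mono) auto
  hence "u^3 \<le> u/16" by (simp add: power3_eq_cube)
  hence "36*u^3 \<le> 11*u" using assms by linarith
  moreover have "0 \<le> u^2" by simp
  ultimately have "0 \<le> 2 + 11*u + 4*u^2 - 36*u^3" using assms by linarith
  hence "0 \<le> u * (2 + 11*u + 4*u^2 - 36*u^3)" using assms by simp
  thus ?thesis using eq by linarith
qed

lemma sqrt_up:
  assumes p2: "p \<ge> 2" and sf: "\<sigma> \<in> fp_set p emin emax" and s0: "\<sigma> > 0"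
    and nS: "in_normal_range p emin emax (sqrt \<sigma>)" and rn: "is_RN p emin emax (sqrt \<sigma>) \<rho>"
  defines "u \<equiv> (2::real) powr (- real p)"
  shows "\<rho> \<le> (1 + 4*u) / (1 + 3*u) * sqrt \<sigma>"
proof -
  have p1: "p \<ge> 1" using p2 by simp
  define S where "S = sqrt \<sigma>"
  have S0: "S > 0" using s0 unfolding S_def by simp
  define e where "e = \<lfloor>log 2 S\<rfloor>"
  define E where "E = (2::real) powr of_int e"
  define U where "U = (2::real) powr of_int (e - int p + 1)"
  define K where "K = (2::int)^(p-1)"
  have u0: "u > 0" unfolding u_def by simp
  have u4: "u \<le> 1/4"
  proof -
    have "u \<le> 2 powr (-2)" unfolding u_def using p2 by (intro powr_mono) auto
    then show ?thesis by (simp add: powr_minus powr_realpow)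
  qed
  have H: "2 powr of_int e \<le> S \<and> \<bar>\<rho> - S\<bar> \<le> 2 powr of_int (e - int p)"
    using rn_err_pos[OF p1 S0 _ ] nS rn unfolding S_def e_def by blast
  have hU: "(2::real) powr of_int (e - int p) = U / 2"
    unfolding U_def by (simp add: powr_add powr_diff)
  have EKU: "E = real_of_int K * U"
  proof -
    have "(2::real) powr of_int e = 2 powr (real (p-1)) * U"
      using p1 unfolding U_def by (simp add: powr_add[symmetric] of_nat_diff)
    then show ?thesis unfolding E_def K_def by (simp add: powr_realpow)
  qed
  have uK: "2 * u * real_of_int K = 1"
  proof -
    have "2 * u * real_of_int K = 2 powr 1 * 2 powr (- real p) * 2 powr (real (p - 1))"
      unfolding u_def K_def by (simp add: powr_realpow)
    also have "\<dots> = 2 powr (1 + (- real p) + real (p - 1))" by (simp only: powr_add)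
    also have "1 + (- real p) + real (p - 1) = 0" using p1 by (simp add: of_nat_diff)
    finally show ?thesis by simp
  qed
  have U0: "U > 0" unfolding U_def by simp
  have ES: "E \<le> S" and err: "\<bar>\<rho> - S\<bar> \<le> U / 2" using H hU unfolding E_def by auto
  have uE: "u * E = U / 2"
  proof -
    have "u * E = (2 * u * real_of_int K) * U / 2" using EKU by simp
    then show ?thesis using uK by simp
  qed
  have c1: "1 \<le> (1 + 4*u) / (1 + 3*u)" using u0 by simp
  show ?thesis
  proof (cases "\<rho> \<le> S")
    case True
    then have "\<rho> \<le> 1 * S" by simp
    also have "\<dots> \<le> (1 + 4*u) / (1 + 3*u) * S" using c1 S0 by (intro mult_right_mono) auto
    finally show ?thesis unfolding S_def .
  next
    case False
    hence rS: "\<rho> > S" by simp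
    have "2 powr of_int e \<le> \<bar>\<rho>\<bar>" using rS ES unfolding E_def by simp
    moreover have rf: "\<rho> \<in> fp_set p emin emax" using rn unfolding is_RN_def by blast
    ultimately obtain k where k: "\<rho> = of_int k * U" using fp_grid unfolding U_def by blast
    have "real_of_int K * U < real_of_int k * U" using rS ES EKU k by simp
    hence "K < k" using U0 by simp
    hence "k = K + 1 \<or> K + 2 \<le> k" by linarith
    then show ?thesis
    proof
      assume kK: "K + 2 \<le> k"
      have "real_of_int (K + 2) * U \<le> real_of_int k * U" using kK U0 by (intro mult_right_mono) auto
      moreover have "E * (1 + 4*u) = real_of_int (K + 2) * U"
      proof -
        have "E * (1 + 4*u) = E + 4 * (u * E)" by (simp add: algebra_simps)
        then show ?thesis using uE EKU by (simp add: algebra_simps)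
      qed
      ultimately have r4: "E * (1 + 4*u) \<le> \<rho>" using k by simp
      have SS: "S \<ge> \<rho> - u * E" using err uE by (simp only: abs_le_iff) linarith
      have "\<rho> * (1 + 3*u) \<le> (1 + 4*u) * S"
      proof -
        have "(1 + 4*u) * (\<rho> - u * E) \<le> (1 + 4*u) * S" using SS u0 by (intro mult_left_mono) auto
        moreover have "u * (E * (1 + 4*u)) \<le> u * \<rho>" using r4 u0 by (intro mult_left_mono) auto
        ultimately show ?thesis by (simp add: algebra_simps)
      qed
      then show ?thesis using u0 unfolding S_def by (simp add: divide_simps mult.commute)
    next
      assume kK: "k = K + 1"
      have "E * (1 + 2*u) = E + 2 * (u * E)" by (simp add: algebra_simps)
      hence rE: "\<rho> = E * (1 + 2*u)" using k EKU uE kK by (simp add: algebra_simps)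
      have "E * (1 + u) = E * (1 + 2*u) - u * E" by (simp add: algebra_simps)
      hence SS: "S \<ge> E * (1 + u)" using err uE rE by (simp only: abs_le_iff) linarith
      have E0: "E > 0" unfolding E_def by simp
      have sig: "\<sigma> = S^2" unfolding S_def using s0 by simp
      have sigE: "\<sigma> \<ge> (E * (1 + u))^2" unfolding sig using SS E0 u0
        by (intro power_mono) auto
      define V where "V = (2::real) powr of_int (2*e - int p + 1)"
      have EV: "E^2 = 2 powr of_int (2*e)" unfolding E_def power2_eq_square
        by (simp add: powr_add[symmetric])
      have EV2: "V = 2 * u * E^2"
      proof -
        have "2 * u * E^2 = 2 powr 1 * 2 powr (- real p) * 2 powr of_int (2*e)" unfolding EV u_def by simp
        also have "\<dots> = 2 powr (1 + (- real p) + of_int (2*e))" by (simp only: powr_add)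
        also have "1 + (- real p) + of_int (2*e) = of_int (2*e - int p + 1)" by simp
        finally show ?thesis unfolding V_def by simp
      qed
      have EKV: "E^2 = real_of_int K * V" unfolding EV2 using uK by (simp add: algebra_simps)
      have V0: "V > 0" unfolding V_def by simp
      have "E^2 \<le> (E * (1 + u))^2" using E0 u0 by (intro power_mono) auto
      hence "2 powr of_int (2*e) \<le> \<bar>\<sigma>\<bar>" using sigE EV by simp
      then obtain j where j: "\<sigma> = of_int j * V" using fp_grid[OF sf] unfolding V_def by blast
      have "(E * (1 + u))^2 = E^2 * (1 + 2*u) + E^2 * u^2" by (simp add: algebra_simps power2_eq_square)
      moreover have "E^2 * u^2 > 0" using E0 u0 by simp
      ultimately have "of_int j * V > E^2 * (1 + 2*u)" using sigE j by linarith
      moreover have "E^2 * (1 + 2*u) = real_of_int (K + 1) * V" using EV2 EKV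
        by (simp add: algebra_simps)
      ultimately have "real_of_int (K + 1) * V < of_int j * V" by simp
      hence "K + 1 < j" using V0 by simp
      hence "K + 2 \<le> j" by simp
      hence "real_of_int (K + 2) * V \<le> of_int j * V" using V0 by (intro mult_right_mono) auto
      moreover have "E^2 * (1 + 4*u) = real_of_int (K + 2) * V"
      proof -
        have "E^2 * (1 + 4*u) = E^2 + 2 * (2 * u * E^2)" by (simp add: algebra_simps)
        also have "\<dots> = real_of_int K * V + 2 * V" using EV2 EKV by simp
        finally show ?thesis by (simp add: algebra_simps)
      qed
      ultimately have sig4: "E^2 * (1 + 4*u) \<le> \<sigma>" using j by simp
      have "\<rho>^2 * (1 + 3*u)^2 = E^2 * ((1 + 2*u) * (1 + 3*u))^2" unfolding rE by (simp add: power_mult_distrib)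
      also have "\<dots> \<le> E^2 * ((1 + 4*u)^2 * (1 + 4*u))" using poly1[OF u0 u4] by (intro mult_left_mono) auto
      also have "\<dots> = (1 + 4*u)^2 * (E^2 * (1 + 4*u))" by simp
      also have "\<dots> \<le> (1 + 4*u)^2 * \<sigma>" using sig4 by (intro mult_left_mono) auto
      also have "\<dots> = ((1 + 4*u) * S)^2" using sig by (simp add: power_mult_distrib)
      finally have "(\<rho> * (1 + 3*u))^2 \<le> ((1 + 4*u) * S)^2" by (simp only: power_mult_distrib)
      moreover have "0 \<le> (1 + 4*u) * S" using S0 u0 by simp
      ultimately have "\<rho> * (1 + 3*u) \<le> (1 + 4*u) * S" by (rule power2_le_imp_le)
      then show ?thesis using u0 unfolding S_def by (simp add: divide_simps mult.commute)
    qed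
  qed
qed

lemma aux_s1:
  assumes u0: "(u::real) > 0"
  shows "sqrt (1 + 2*u) * (1 + 3*u) \<le> (1 + 2*u)^2"
proof -
  have "sqrt (1 + 2*u) * (1 + 3*u) = sqrt ((1 + 2*u) * (1 + 3*u)^2)"
    using u0 by (simp add: real_sqrt_mult)
  also have "\<dots> \<le> (1 + 2*u)^2"
  proof (rule real_le_lsqrt)
    show "0 \<le> (1 + 2*u)^2" by simp
    have "((1 + 2*u)^2)^2 - (1 + 2*u) * (1 + 3*u)^2 = (1 + 2*u) * (3*u^2 + 8*u^3)"
      by (simp add: algebra_simps power2_eq_square power3_eq_cube)
    moreover have "0 \<le> (1 + 2*u) * (3*u^2 + 8*u^3)" using u0 by simp
    ultimately show "(1 + 2*u) * (1 + 3*u)^2 \<le> ((1 + 2*u)^2)^2" by linarith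
  qed
  finally show ?thesis .
qed

lemma aux_up:
  assumes u0: "(u::real) > 0"
  shows "(1 + 4*u) / (1 + 3*u) * (1 + u/(1+u)) \<le> 1 + (1 + 3*u - sqrt (1 + 2*u)) / (1 + u)"
proof -
  have L: "(1 + 4*u) / (1 + 3*u) * (1 + u/(1+u)) = (1 + 4*u) * (1 + 2*u) / ((1 + 3*u) * (1 + u))"
    using u0 by (simp add: field_simps)
  have R: "1 + (1 + 3*u - sqrt (1 + 2*u)) / (1 + u) = (2 + 4*u - sqrt (1 + 2*u)) / (1 + u)"
    using u0 by (simp add: divide_simps)
  have "(1 + 4*u) * (1 + 2*u) \<le> (2 + 4*u - sqrt (1 + 2*u)) * (1 + 3*u)"
  proof -
    have "(2 + 4*u - sqrt (1 + 2*u)) * (1 + 3*u) = (2 + 4*u) * (1 + 3*u) - sqrt (1 + 2*u) * (1 + 3*u)"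
      by (simp add: algebra_simps)
    moreover have "(2 + 4*u) * (1 + 3*u) - (1 + 2*u)^2 = (1 + 4*u) * (1 + 2*u)"
      by (simp add: algebra_simps power2_eq_square)
    ultimately show ?thesis using aux_s1[OF u0] by linarith
  qed
  hence "(1 + 4*u) * (1 + 2*u) / (1 + 3*u) \<le> 2 + 4*u - sqrt (1 + 2*u)"
    using u0 by (simp add: pos_divide_le_eq)
  hence "(1 + 4*u) * (1 + 2*u) / (1 + 3*u) / (1 + u) \<le> (2 + 4*u - sqrt (1 + 2*u)) / (1 + u)"
    using u0 by (intro divide_right_mono) auto
  then show ?thesis using L R by simp
qed

lemma aux_lo:
  assumes u0: "(u::real) > 0"
  shows "1 - (1 - u/(1+u))^2 \<le> (1 + 3*u - sqrt (1 + 2*u)) / (1 + u)"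
proof -
  have s: "sqrt (1 + 2*u) * (1 + u) \<le> 1 + 2*u + 2*u^2"
  proof -
    have "sqrt (1 + 2*u) * (1 + u) = sqrt ((1 + 2*u) * (1 + u)^2)"
      using u0 by (simp add: real_sqrt_mult)
    also have "\<dots> \<le> 1 + 2*u + 2*u^2"
    proof (rule real_le_lsqrt)
      show "0 \<le> 1 + 2*u + 2*u^2" using u0 by simp
      have "(1 + 2*u + 2*u^2)^2 - (1 + 2*u) * (1 + u)^2 = 3*u^2 + 6*u^3 + 4*u^4"
        by (simp add: algebra_simps power2_eq_square power3_eq_cube power4_eq_xxxx)
      moreover have "0 \<le> 3*u^2 + 6*u^3 + 4*u^4" using u0 by simp
      ultimately show "(1 + 2*u) * (1 + u)^2 \<le> (1 + 2*u + 2*u^2)^2" by linarith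
    qed
    finally show ?thesis .
  qed
  have a: "1 - u/(1+u) = 1 / (1 + u)" using u0 by (simp add: divide_simps)
  have L: "1 - (1 - u/(1+u))^2 = (2*u + u^2) / (1 + u)^2"
  proof -
    have "(1 + u)^2 > 0" using u0 by simp
    then show ?thesis unfolding a by (simp add: divide_simps power2_eq_square algebra_simps)
  qed
  have R: "(1 + 3*u - sqrt (1 + 2*u)) / (1 + u) = ((1 + 3*u) * (1 + u) - sqrt (1 + 2*u) * (1 + u)) / (1 + u)^2"
  proof -
    have "((1 + 3*u) * (1 + u) - sqrt (1 + 2*u) * (1 + u)) = (1 + 3*u - sqrt (1 + 2*u)) * (1 + u)"
      by (simp add: algebra_simps)
    moreover have "(1 + u)^2 = (1 + u) * (1 + u)" by (simp add: power2_eq_square)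
    ultimately show ?thesis using u0 by simp
  qed
  have "2*u + u^2 \<le> (1 + 3*u) * (1 + u) - sqrt (1 + 2*u) * (1 + u)"
  proof -
    have "(1 + 3*u) * (1 + u) - (1 + 2*u + 2*u^2) = 2*u + u^2" by (simp add: algebra_simps power2_eq_square)
    then show ?thesis using s by linarith
  qed
  hence "(2*u + u^2) / (1 + u)^2 \<le> ((1 + 3*u) * (1 + u) - sqrt (1 + 2*u) * (1 + u)) / (1 + u)^2"
    using u0 by (intro divide_right_mono) auto
  then show ?thesis using L R by simp
qed

lemma aux_kappa:
  assumes u0: "(u::real) > 0" and u4: "u \<le> 1/4"
  shows "\<exists>\<kappa>::real. (1 + 3*u - sqrt (1 + 2*u)) / (1 + u) = 2*u + \<kappa> * u^2 \<and> \<kappa> < - 5/4"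
proof -
  define B where "B = (1 + 3*u - sqrt (1 + 2*u)) / (1 + u)"
  define \<kappa> where "\<kappa> = (B - 2*u) / u^2"
  have eq: "B = 2*u + \<kappa> * u^2" unfolding \<kappa>_def using u0 by simp
  define w where "w = 1 + u - 3/4*u^2 + 5/4*u^3"
  have w2: "w^2 = (1 + 2*u) + u^2 * (-1/2 + u + 49/16*u^2 - 15/8*u^3 + 25/16*u^4)"
    unfolding w_def by (simp add: algebra_simps power2_eq_square power3_eq_cube power4_eq_xxxx)
  have uu: "u*u \<le> (1/4)*(1/4)" using u0 u4 by (intro mult_mono) auto
  hence u2: "u^2 \<le> 1/16" by (simp add: power2_eq_square)
  have "u^2*u^2 \<le> (1/16)*(1/16)" using u2 by (intro mult_mono) auto
  hence u4': "u^4 \<le> 1/256" by (simp add: power4_eq_xxxx power2_eq_square mult.assoc)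
  have "0 \<le> u^3" using u0 by simp
  hence "-1/2 + u + 49/16*u^2 - 15/8*u^3 + 25/16*u^4 < 0" using u4 u2 u4' by linarith
  moreover have "u^2 > 0" using u0 by simp
  ultimately have "u^2 * (-1/2 + u + 49/16*u^2 - 15/8*u^3 + 25/16*u^4) < 0"
    by (simp add: mult_pos_neg)
  hence "w^2 < 1 + 2*u" using w2 by linarith
  hence ws: "w < sqrt (1 + 2*u)" by (rule real_less_rsqrt)
  have "B * (1 + u) = 1 + 3*u - sqrt (1 + 2*u)" unfolding B_def using u0 by simp
  hence "B * (1 + u) < 1 + 3*u - w" using ws by linarith
  moreover have "(2*u - 5/4*u^2) * (1 + u) = 1 + 3*u - w"
    unfolding w_def by (simp add: field_simps power2_eq_square power3_eq_cube)
  ultimately have "B * (1 + u) < (2*u - 5/4*u^2) * (1 + u)" by simp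
  hence "B < 2*u - 5/4*u^2" using u0 by (simp add: mult_less_cancel_right)
  hence "\<kappa> * u^2 < (-5/4) * u^2" using eq by simp
  hence "\<kappa> * u^2 < (-5/4) * u^2" by simp
  hence "\<kappa> < -5/4" using \<open>u^2 > 0\<close> by (rule mult_right_less_imp_less[OF _ less_imp_le])
  then show ?thesis using eq unfolding B_def by blast
qed


theorem theorem1:
  fixes p :: nat and emin emax :: int and x y sx sy \<sigma> \<rho> :: real
  defines "u \<equiv> (2::real) powr (- real p)"
  assumes hp: "p \<ge> 2"
    and hx: "x \<in> fp_set p emin emax" and hy: "y \<in> fp_set p emin emax"
    and hnz: "x \<noteq> 0 \<or> y \<noteq> 0"
    and hsx: "is_RN p emin emax (x\<^sup>2) sx"
    and hsy: "is_RN p emin emax (y\<^sup>2) sy"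
    and hsig: "is_RN p emin emax (sx + sy) \<sigma>"
    and hrho: "is_RN p emin emax (sqrt \<sigma>) \<rho>"
    and nx2: "in_normal_range p emin emax (x\<^sup>2)"
    and ny2: "in_normal_range p emin emax (y\<^sup>2)"
    and nsx: "in_normal_range p emin emax sx"
    and nsy: "in_normal_range p emin emax sy"
    and nsum: "in_normal_range p emin emax (sx + sy)"
    and nsig: "in_normal_range p emin emax \<sigma>"
    and nsq: "in_normal_range p emin emax (sqrt \<sigma>)"
    and nrho: "in_normal_range p emin emax \<rho>"
  shows "\<bar>\<rho> / sqrt (x\<^sup>2 + y\<^sup>2) - 1\<bar> \<le> (1 + 3*u - sqrt (1 + 2*u)) / (1 + u)
         \<and> (\<exists>\<kappa>::real. (1 + 3*u - sqrt (1 + 2*u)) / (1 + u) = 2*u + \<kappa> * u\<^sup>2 \<and> \<kappa> < - 5/4)"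
proof -
  have p1: "p \<ge> 1" using hp by simp
  have u0: "u > 0" unfolding u_def by simp
  have u4: "u \<le> 1/4"
  proof -
    have "u \<le> 2 powr (-2)" unfolding u_def using hp by (intro powr_mono) auto
    then show ?thesis by (simp add: powr_minus powr_realpow)
  qed
  have ee: "emin \<le> emax" using hx unfolding fp_set_def by auto
  define v where "v = u / (1 + u)"
  have v0: "0 \<le> v" "v < 1" using u0 unfolding v_def by auto
  have rel: "\<And>t r. t \<ge> 0 \<Longrightarrow> in_normal_range p emin emax t \<Longrightarrow> is_RN p emin emax t r \<Longrightarrow> \<bar>r - t\<bar> \<le> v * t"
    using rn_err_rel[OF p1 ee] unfolding v_def u_def by blast
  define t where "t = x\<^sup>2 + y\<^sup>2"
  have t0: "t > 0" unfolding t_def using hnz by (auto simp: add_pos_nonneg add_nonneg_pos)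
  have ex: "\<bar>sx - x\<^sup>2\<bar> \<le> v * x\<^sup>2" using rel[OF _ nx2 hsx] by simp
  have ey: "\<bar>sy - y\<^sup>2\<bar> \<le> v * y\<^sup>2" using rel[OF _ ny2 hsy] by simp
  have sxy_up: "sx + sy \<le> (1 + v) * t" and sxy_lo: "(1 - v) * t \<le> sx + sy"
    using ex ey unfolding t_def by (auto simp: abs_le_iff algebra_simps)
  have sxy0: "sx + sy \<ge> 0"
  proof -
    have "(1 - v) * t \<ge> 0" using v0 t0 by simp
    then show ?thesis using sxy_lo by linarith
  qed
  have es: "\<bar>\<sigma> - (sx + sy)\<bar> \<le> v * (sx + sy)" using rel[OF sxy0 nsum hsig] .
  have sig_up: "\<sigma> \<le> (1 + v) * (sx + sy)" and sig_lo: "(1 - v) * (sx + sy) \<le> \<sigma>"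
    using es by (auto simp: abs_le_iff algebra_simps)
  have sig_up2: "\<sigma> \<le> (1 + v)^2 * t"
  proof -
    have "(1 + v) * (sx + sy) \<le> (1 + v) * ((1 + v) * t)" using sxy_up v0 by (intro mult_left_mono) auto
    then show ?thesis using sig_up by (simp add: power2_eq_square mult.assoc)
  qed
  have sig_lo2: "(1 - v)^2 * t \<le> \<sigma>"
  proof -
    have "(1 - v) * ((1 - v) * t) \<le> (1 - v) * (sx + sy)" using sxy_lo v0 by (intro mult_left_mono) auto
    then show ?thesis using sig_lo by (simp add: power2_eq_square mult.assoc)
  qed
  have sig0: "\<sigma> > 0"
  proof -
    have "(1 - v)^2 * t > 0" using v0 t0 by simp
    then show ?thesis using sig_lo2 by linarith
  qed
  have sigf: "\<sigma> \<in> fp_set p emin emax" using hsig unfolding is_RN_def by blast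
  have rho_up: "\<rho> \<le> (1 + 4*u) / (1 + 3*u) * sqrt \<sigma>"
    using sqrt_up[OF hp sigf sig0 nsq hrho] unfolding u_def .
  have er: "\<bar>\<rho> - sqrt \<sigma>\<bar> \<le> v * sqrt \<sigma>" using rel[OF _ nsq hrho] sig0 by simp
  hence rho_lo: "(1 - v) * sqrt \<sigma> \<le> \<rho>" by (auto simp: abs_le_iff algebra_simps)
  have st: "sqrt t > 0" using t0 by simp
  have sq_up: "sqrt \<sigma> \<le> (1 + v) * sqrt t"
  proof -
    have "sqrt \<sigma> \<le> sqrt ((1 + v)^2 * t)" using sig_up2 by simp
    also have "\<dots> = (1 + v) * sqrt t" using v0 by (simp add: real_sqrt_mult)
    finally show ?thesis .
  qed
  have sq_lo: "(1 - v) * sqrt t \<le> sqrt \<sigma>"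
  proof -
    have "(1 - v) * sqrt t = sqrt ((1 - v)^2 * t)" using v0 by (simp add: real_sqrt_mult)
    also have "\<dots> \<le> sqrt \<sigma>" using sig_lo2 by simp
    finally show ?thesis .
  qed
  define q where "q = \<rho> / sqrt t"
  have c0: "0 \<le> (1 + 4*u) / (1 + 3*u)" using u0 by simp
  have q_up: "q \<le> (1 + 4*u) / (1 + 3*u) * (1 + v)"
  proof -
    have "\<rho> \<le> (1 + 4*u) / (1 + 3*u) * ((1 + v) * sqrt t)"
      using rho_up mult_left_mono[OF sq_up c0] by linarith
    then show ?thesis unfolding q_def using st by (simp add: divide_simps mult.assoc)
  qed
  have q_lo: "(1 - v)^2 \<le> q"
  proof -
    have "(1 - v) * ((1 - v) * sqrt t) \<le> (1 - v) * sqrt \<sigma>" using sq_lo v0 by (intro mult_left_mono) auto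
    hence "(1 - v)^2 * sqrt t \<le> \<rho>" using rho_lo by (simp add: power2_eq_square mult.assoc)
    then show ?thesis unfolding q_def using st by (simp add: divide_simps)
  qed
  have A: "q - 1 \<le> (1 + 3*u - sqrt (1 + 2*u)) / (1 + u)"
    using q_up aux_up[OF u0] unfolding v_def by linarith
  have B: "1 - q \<le> (1 + 3*u - sqrt (1 + 2*u)) / (1 + u)"
    using q_lo aux_lo[OF u0] unfolding v_def by linarith
  have "\<bar>q - 1\<bar> \<le> (1 + 3*u - sqrt (1 + 2*u)) / (1 + u)" using A B by (simp add: abs_le_iff)
  then show ?thesis using aux_kappa[OF u0 u4] unfolding q_def t_def by simp
qed

end
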